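(* Let $p \in (0,1]$, let $s = 1/p \geq 1$, and let $q = 1-p$. For integers $1 \le n \le s$ define $$x_n = \sum_{k=1}^n\binom{n}{k}(-1)^{k+1}\frac{1}{1-q^k}, \qquad y_n = \sum_{k=1}^n\binom{n}{k}(-1)^{k+1}\frac{1+q^k}{(1-q^k)^2}$$ (these are $\mathbb{E}(Y_n^s)$ and $\mathbb{E}((Y_n^s)^2)$ where $Y_n^s$ is the maximum of $n$ independent geometric random variables on $\{1,2,\dots\}$ with parameter $p$). Then $y_1 = (2-p)/p^2$, and for every integer $n$ with $1 < n \le s$, $$y_n \;=\; \frac{\sum_{i=1}^{n-1}\binom{n}{i} p^i (1 - p)^{n - i}\, y_{n-i} \;-\; 1 \;+\; 2x_n}{1- (1 - p)^{n}}.$$ That is, the sequence $(y_n)$ is the solution of this recurrence with initial value $(2-p)/p^2$.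
   Context: A geometric random variable with parameter $p$ on $\{1,2,\dots\}$ has $\mathbb{P}(Z=m)=(1-p)^{m-1}p$ for $m\ge1$. *)

theory Defs
  imports Complex_Main
begin

definition xmax :: "real \<Rightarrow> nat \<Rightarrow> real" where
  "xmax p n = (\<Sum>k=1..n. real (n choose k) * (-1) ^ (k + 1) * (1 / (1 - (1 - p) ^ k)))"

definition ymax :: "real \<Rightarrow> nat \<Rightarrow> real" where
  "ymax p n = (\<Sum>k=1..n. real (n choose k) * (-1) ^ (k + 1)
      * ((1 + (1 - p) ^ k) / (1 - (1 - p) ^ k) ^ 2))"

end

theory Submission
  imports Defs
begin

lemma chz: "\<not> i + k \<le> n \<Longrightarrow> (n choose i) * ((n - i) choose k) = 0 \<and> (n choose k) * ((n - k) choose (i::nat)) = 0"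
  by (cases "k \<le> n"; cases "i \<le> n") (auto simp: binomial_eq_0)

lemma ch: "(n choose i) * ((n - i) choose k) = (n choose k) * ((n - k) choose (i::nat))"
proof (cases "i + k \<le> n")
  case True
  have a: "(n choose (i+k)) * ((i+k) choose k) = (n choose k) * ((n - k) choose i)"
    using choose_mult[of k "i+k" n] True by simp
  have b: "(n choose (i+k)) * ((i+k) choose i) = (n choose i) * ((n - i) choose k)"
    using choose_mult[of i "i+k" n] True by simp
  have c: "((i+k) choose k) = ((i+k) choose i)"
    using binomial_symmetric[of k "i+k"] by simp
  show ?thesis using a b c by simp
next
  case False
  show ?thesis
  proof (cases "k \<le> n")
    case True
    then have "n - k < i" using False by auto
    moreover have "n - i < k \<or> n < i" using False by auto
    ultimately show ?thesis by (auto simp: binomial_eq_0)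
  qed (simp add: binomial_eq_0)
qed

lemma binsum:
  fixes p q :: real
  assumes "p + q = 1"
  shows "(\<Sum>i=0..m. real (m choose i) * p ^ i * q ^ (m - i)) = 1"
proof -
  have "(\<Sum>i=0..m. real (m choose i) * p ^ i * q ^ (m - i)) = (p + q) ^ m"
    by (simp add: binomial_ring atLeast0AtMost)
  then show ?thesis using assms by simp
qed

lemma swap:
  fixes p q :: real and g :: "nat \<Rightarrow> real"
  assumes pq: "p + q = 1"
  shows "(\<Sum>i=0..n. real (n choose i) * p ^ i * q ^ (n - i) *
           (\<Sum>k=1..n-i. real ((n-i) choose k) * (-1) ^ (k + 1) * g k))
       = (\<Sum>k=1..n. real (n choose k) * (-1) ^ (k + 1) * (q ^ k * g k))"
proof -
  have inner: "(\<Sum>k=1..n-i. real ((n-i) choose k) * (-1) ^ (k + 1) * g k)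
      = (\<Sum>k=1..n. real ((n-i) choose k) * (-1) ^ (k + 1) * g k)" if "i \<le> n" for i
  proof -
    have "(\<Sum>k=1..n. real ((n-i) choose k) * (-1) ^ (k + 1) * g k)
        = (\<Sum>k=1..n-i. real ((n-i) choose k) * (-1) ^ (k + 1) * g k)"
      by (rule sum.mono_neutral_right) auto
    then show ?thesis by simp
  qed
  have trm: "real (n choose i) * p ^ i * q ^ (n - i) * (real ((n-i) choose k) * (-1) ^ (k + 1) * g k)
      = real (n choose k) * (-1) ^ (k + 1) * (q ^ k * g k) * (real ((n-k) choose i) * p ^ i * q ^ (n - k - i))"
    for i k
  proof (cases "i + k \<le> n")
    case True
    have e: "q ^ (n - i) = q ^ k * q ^ (n - k - i)"
      using True by (simp add: power_add[symmetric])
    have c: "real (n choose i) * real ((n-i) choose k) = real (n choose k) * real ((n-k) choose i)"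
      using ch[of n i k] by (metis of_nat_mult)
    have "real (n choose i) * p ^ i * q ^ (n - i) * (real ((n-i) choose k) * (-1) ^ (k + 1) * g k)
      = (real (n choose i) * real ((n-i) choose k)) * ((-1) ^ (k + 1) * g k * p ^ i * q ^ k * q ^ (n - k - i))"
      unfolding e by (simp only: mult_ac)
    also have "\<dots> = (real (n choose k) * real ((n-k) choose i)) * ((-1) ^ (k + 1) * g k * p ^ i * q ^ k * q ^ (n - k - i))"
      by (simp only: c)
    also have "\<dots> = real (n choose k) * (-1) ^ (k + 1) * (q ^ k * g k) * (real ((n-k) choose i) * p ^ i * q ^ (n - k - i))"
      by (simp only: mult_ac)
    finally show ?thesis .
  next
    case False
    from chz[OF False] have z1: "real (n choose i) * real ((n-i) choose k) = 0"
       and z2: "real (n choose k) * real ((n-k) choose i) = 0" by (metis of_nat_0 of_nat_mult)+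
    have "real (n choose i) * p ^ i * q ^ (n - i) * (real ((n-i) choose k) * (-1) ^ (k + 1) * g k)
      = (real (n choose i) * real ((n-i) choose k)) * ((-1) ^ (k + 1) * g k * p ^ i * q ^ (n-i))"
      by (simp only: mult_ac)
    moreover have "real (n choose k) * (-1) ^ (k + 1) * (q ^ k * g k) * (real ((n-k) choose i) * p ^ i * q ^ (n - k - i))
      = (real (n choose k) * real ((n-k) choose i)) * ((-1) ^ (k + 1) * g k * p ^ i * q ^ k * q ^ (n - k - i))"
      by (simp only: mult_ac)
    ultimately show ?thesis by (simp only: z1 z2 mult_zero_left)
  qed
  have "(\<Sum>i=0..n. real (n choose i) * p ^ i * q ^ (n - i) *
           (\<Sum>k=1..n-i. real ((n-i) choose k) * (-1) ^ (k + 1) * g k))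
      = (\<Sum>i=0..n. \<Sum>k=1..n. real (n choose i) * p ^ i * q ^ (n - i) *
           (real ((n-i) choose k) * (-1) ^ (k + 1) * g k))"
  proof (rule sum.cong)
    fix i assume "i \<in> {0..n}"
    then have "i \<le> n" by simp
    then show "real (n choose i) * p ^ i * q ^ (n - i) *
           (\<Sum>k=1..n-i. real ((n-i) choose k) * (-1) ^ (k + 1) * g k) = (\<Sum>k=1..n. real (n choose i) * p ^ i * q ^ (n - i) *
           (real ((n-i) choose k) * (-1) ^ (k + 1) * g k))"
      by (simp only: inner sum_distrib_left)
  qed simp
  also have "\<dots> = (\<Sum>k=1..n. \<Sum>i=0..n. real (n choose k) * (-1) ^ (k + 1) * (q ^ k * g k) * (real ((n-k) choose i) * p ^ i * q ^ (n - k - i)))"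
    by (subst sum.swap) (simp only: trm)
  also have "\<dots> = (\<Sum>k=1..n. real (n choose k) * (-1) ^ (k + 1) * (q ^ k * g k))"
  proof (rule sum.cong)
    fix k assume k: "k \<in> {1..n}"
    have "(\<Sum>i=0..n. real ((n-k) choose i) * p ^ i * q ^ (n - k - i))
        = (\<Sum>i=0..n-k. real ((n-k) choose i) * p ^ i * q ^ (n - k - i))"
      by (rule sum.mono_neutral_right) auto
    also have "\<dots> = 1" using binsum[OF pq, of "n-k"] by (simp only: diff_diff_left)
    finally show "(\<Sum>i=0..n. real (n choose k) * (-1) ^ (k + 1) * (q ^ k * g k) * (real ((n-k) choose i) * p ^ i * q ^ (n - k - i)))
        = real (n choose k) * (-1) ^ (k + 1) * (q ^ k * g k)"
      by (simp only: sum_distrib_left[symmetric] mult_1_right)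
  qed simp
  finally show ?thesis .
qed

lemma sum_one: "n \<ge> 1 \<Longrightarrow> (\<Sum>k=1..n. real (n choose k) * (-1) ^ (k + 1)) = (1::real)"
proof -
  assume n: "n \<ge> 1"
  have "(0::real) = (-1 + 1) ^ n" using n by simp
  also have "\<dots> = (\<Sum>k\<le>n. real (n choose k) * (-1) ^ k * 1 ^ (n - k))"
    by (rule binomial_ring)
  also have "\<dots> = (\<Sum>k=0..n. real (n choose k) * (-1) ^ k)"
    by (simp add: atLeast0AtMost)
  also have "\<dots> = 1 + (\<Sum>k=1..n. real (n choose k) * (-1) ^ k)"
    by (simp add: sum.atLeast_Suc_atMost)
  finally have "(\<Sum>k=1..n. real (n choose k) * (-1) ^ k) = -1" by linarith
  then show ?thesis by (simp add: sum_negf)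
qed

lemma kk: "(t::real) \<noteq> 1 \<Longrightarrow> t * ((1 + t) / (1 - t) ^ 2) = (1 + t) / (1 - t) ^ 2 - 2 * (1 / (1 - t)) + 1"
proof -
  assume "t \<noteq> 1" 
  define d where "d = 1 - t"
  have d: "d \<noteq> 0" using \<open>t \<noteq> 1\<close> by (simp add: d_def)
  have t: "t = 1 - d" by (simp add: d_def)
  have "(1 - d) * ((2 - d) / d ^ 2) = (2 - d) / d ^ 2 - 2 * (1 / d) + 1"
    using d by (simp add: field_simps power2_eq_square)
  then show ?thesis unfolding t by simp
qed
lemma split3:
  fixes f :: "nat \<Rightarrow> real"
  assumes "1 < n"
  shows "(\<Sum>i=0..n. f i) = f 0 + (\<Sum>i=1..n-1. f i) + f n"
proof -
  obtain m where m: "n = Suc m" "m \<ge> 1" using assms by (cases n) auto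
  have "(\<Sum>i=0..n. f i) = f 0 + (\<Sum>i=1..n. f i)"
    by (simp add: sum.atLeast_Suc_atMost)
  also have "(\<Sum>i=1..n. f i) = (\<Sum>i=1..n-1. f i) + f n"
    using m by (simp add: sum.cl_ivl_Suc)
  finally show ?thesis by simp
qed

theorem theoremB4:
  fixes p :: real
  assumes "0 < p" and "p \<le> 1"
  shows "ymax p 1 = (2 - p) / p ^ 2
    \<and> (\<forall>n::nat. 1 < n \<and> real n \<le> 1 / p \<longrightarrow>
         ymax p n = ((\<Sum>i=1..n-1. real (n choose i) * p ^ i * (1 - p) ^ (n - i) * ymax p (n - i))
                      - 1 + 2 * xmax p n) / (1 - (1 - p) ^ n))"
proof
  define q where "q = 1 - p"
  have pq: "p + q = 1" by (simp add: q_def)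
  have q0: "0 \<le> q" and q1: "q < 1" using assms by (auto simp: q_def)
  have qk: "q ^ k < 1" if "k \<ge> 1" for k
    using q0 q1 that by (simp add: power_less_one_iff)
  show "ymax p 1 = (2 - p) / p ^ 2"
    using assms by (simp add: ymax_def field_simps power2_eq_square)
  show "\<forall>n::nat. 1 < n \<and> real n \<le> 1 / p \<longrightarrow>
         ymax p n = ((\<Sum>i=1..n-1. real (n choose i) * p ^ i * (1 - p) ^ (n - i) * ymax p (n - i))
                      - 1 + 2 * xmax p n) / (1 - (1 - p) ^ n)"
  proof (intro allI impI)
    fix n :: nat assume hn: "1 < n \<and> real n \<le> 1 / p"
    then have n1: "1 < n" by simp
    define gy where "gy k = (1 + q ^ k) / (1 - q ^ k) ^ 2" for k :: nat
    define gx where "gx k = 1 / (1 - q ^ k)" for k :: nat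
    have ym: "ymax p m = (\<Sum>k=1..m. real (m choose k) * (-1) ^ (k + 1) * gy k)" for m
      by (simp add: ymax_def gy_def q_def)
    have xm: "xmax p m = (\<Sum>k=1..m. real (m choose k) * (-1) ^ (k + 1) * gx k)" for m
      by (simp add: xmax_def gx_def q_def)
    have key: "q ^ k * gy k = gy k - 2 * gx k + 1" if "k \<ge> 1" for k
    proof -
      have "q ^ k \<noteq> 1" using qk[OF that] by simp
      then show ?thesis unfolding gy_def gx_def by (rule kk)
    qed
    have "(\<Sum>i=0..n. real (n choose i) * p ^ i * q ^ (n - i) * ymax p (n - i))
       = (\<Sum>k=1..n. real (n choose k) * (-1) ^ (k + 1) * (q ^ k * gy k))"
      unfolding ym by (rule swap[OF pq])
    also have "\<dots> = (\<Sum>k=1..n. real (n choose k) * (-1) ^ (k + 1) * gy k)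
        - 2 * (\<Sum>k=1..n. real (n choose k) * (-1) ^ (k + 1) * gx k)
        + (\<Sum>k=1..n. real (n choose k) * (-1) ^ (k + 1))"
    proof -
      have "(\<Sum>k=1..n. real (n choose k) * (-1) ^ (k + 1) * (q ^ k * gy k))
        = (\<Sum>k=1..n. real (n choose k) * (-1) ^ (k + 1) * gy k
             - 2 * (real (n choose k) * (-1) ^ (k + 1) * gx k) + real (n choose k) * (-1) ^ (k + 1))"
      proof (rule sum.cong)
        fix k assume "k \<in> {1..n}"
        then have "k \<ge> 1" by simp
        then show "real (n choose k) * (-1) ^ (k + 1) * (q ^ k * gy k) = real (n choose k) * (-1) ^ (k + 1) * gy k
             - 2 * (real (n choose k) * (-1) ^ (k + 1) * gx k) + real (n choose k) * (-1) ^ (k + 1)"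
          by (simp only: key) (simp add: algebra_simps)
      qed simp
      then show ?thesis by (simp only: sum.distrib sum_subtractf sum_distrib_left)
    qed
    also have "\<dots> = ymax p n - 2 * xmax p n + 1"
      using n1 sum_one[of n] by (simp only: ym xm)
    finally have A: "(\<Sum>i=0..n. real (n choose i) * p ^ i * q ^ (n - i) * ymax p (n - i))
        = ymax p n - 2 * xmax p n + 1" .
    have "(\<Sum>i=0..n. real (n choose i) * p ^ i * q ^ (n - i) * ymax p (n - i))
       = q ^ n * ymax p n + (\<Sum>i=1..n-1. real (n choose i) * p ^ i * q ^ (n - i) * ymax p (n - i))"
      using split3[OF n1] by (simp add: ymax_def)
    with A have B: "(1 - q ^ n) * ymax p n = (\<Sum>i=1..n-1. real (n choose i) * p ^ i * q ^ (n - i) * ymax p (n - i)) - 1 + 2 * xmax p n"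
      by (simp add: algebra_simps)
    have "1 - q ^ n \<noteq> 0" using qk[of n] n1 by simp
    with B show "ymax p n = ((\<Sum>i=1..n-1. real (n choose i) * p ^ i * (1 - p) ^ (n - i) * ymax p (n - i))
                      - 1 + 2 * xmax p n) / (1 - (1 - p) ^ n)"
      unfolding q_def by (simp add: field_simps)
  qed
qed

end
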